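(* For every $\kappa,\lambda\in(0,1)$, the measure rule LB-NxM$(\kappa,\lambda)$ is $\zeta$-slick for $\zeta=1/(\kappa n)$: for all neighboring samples $S,S'\in(\mathcal{X}\times\{\pm1\})^n$ and every finite sequence of hypotheses $H=(h_1,\dots,h_t)$ with $h_j:\mathcal X\to[-1,1]$, letting $\hat\mu$ and $\hat\mu'$ be the distributions output by LB-NxM on $(S,H)$ and $(S',H)$, we have $\Delta(\hat\mu,\hat\mu')\le\frac{1}{\kappa n}$.
   Context: Neighboring samples differ in at most one position. $\Delta(Y,Z)=\max_A|\Pr[Y\in A]-\Pr[Z\in A]|$ is statistical distance. Measures on $[n]$: $\mu:[n]\to[0,1]$, $|\mu|=\sum_i\mu(i)$, $d(\mu)=|\mu|/n$, $\hat\mu=\mu/|\mu|$, $\mathrm{KL}(\mu_1\|\mu_2)=\sum_i\mu_1(i)\log(\mu_1(i)/\mu_2(i))+\mu_2(i)-\mu_1(i)$, $\Gamma_\kappa=\{\mu:d(\mu)\ge\kappa\}$, $\Pi_{\Gamma_\kappa}\tilde\mu=\arg\min_{\mu\in\Gamma_\kappa}\mathrm{KL}(\mu\|\tilde\mu)$. LB-NxM$(\kappa,\lambda)$ on $S=((x_i,y_i))_{i=1}^n$ and $h_1,\dots,h_t$: $\ell_j(i)=1-\frac12|h_j(x_i)-y_i|$, $\tilde\mu(i)=\kappa e^{-\lambda\sum_{j=1}^t\ell_j(i)}$, $\mu=\Pi_{\Gamma_\kappa}\tilde\mu$, output $\hat\mu$. *)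

theory Defs
  imports Complex_Main
begin

text \<open>Measures on [n] = {1..n}: functions nat => real with values in [0,1] on {1..n}
  and zero outside (the zero-outside convention makes the representation canonical).\<close>
definition measures :: "nat \<Rightarrow> (nat \<Rightarrow> real) set" where
  "measures n = {\<mu>. (\<forall>i\<in>{1..n}. 0 \<le> \<mu> i \<and> \<mu> i \<le> 1) \<and> (\<forall>i. i \<notin> {1..n} \<longrightarrow> \<mu> i = 0)}"

definition msize :: "nat \<Rightarrow> (nat \<Rightarrow> real) \<Rightarrow> real" where
  "msize n \<mu> = (\<Sum>i\<in>{1..n}. \<mu> i)"

definition density :: "nat \<Rightarrow> (nat \<Rightarrow> real) \<Rightarrow> real" where
  "density n \<mu> = msize n \<mu> / real n"

definition normalize :: "nat \<Rightarrow> (nat \<Rightarrow> real) \<Rightarrow> (nat \<Rightarrow> real)" where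
  "normalize n \<mu> = (\<lambda>i. \<mu> i / msize n \<mu>)"

definition KL :: "nat \<Rightarrow> (nat \<Rightarrow> real) \<Rightarrow> (nat \<Rightarrow> real) \<Rightarrow> real" where
  "KL n \<mu>1 \<mu>2 = (\<Sum>i\<in>{1..n}.
      (if \<mu>1 i = 0 then 0 else \<mu>1 i * ln (\<mu>1 i / \<mu>2 i)) + \<mu>2 i - \<mu>1 i)"

definition Gamma :: "nat \<Rightarrow> real \<Rightarrow> (nat \<Rightarrow> real) set" where
  "Gamma n \<kappa> = {\<mu> \<in> measures n. density n \<mu> \<ge> \<kappa>}"

definition proj_Gamma :: "nat \<Rightarrow> real \<Rightarrow> (nat \<Rightarrow> real) \<Rightarrow> (nat \<Rightarrow> real)" where
  "proj_Gamma n \<kappa> \<mu>t = (SOME \<mu>. \<mu> \<in> Gamma n \<kappa> \<and>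
      (\<forall>\<nu>\<in>Gamma n \<kappa>. KL n \<mu> \<mu>t \<le> KL n \<nu> \<mu>t))"

definition LB_NxM :: "real \<Rightarrow> real \<Rightarrow> nat \<Rightarrow> (nat \<Rightarrow> 'x \<times> real) \<Rightarrow> ('x \<Rightarrow> real) list
    \<Rightarrow> (nat \<Rightarrow> real)" where
  "LB_NxM \<kappa> lam n S hs =
    (let loss = (\<lambda>h i. 1 - \<bar>h (fst (S i)) - snd (S i)\<bar> / 2);
         \<mu>t = (\<lambda>i. if i \<in> {1..n} then \<kappa> * exp (- lam * (\<Sum>h\<leftarrow>hs. loss h i)) else 0);
         \<mu> = proj_Gamma n \<kappa> \<mu>t
     in normalize n \<mu>)"

definition stat_dist :: "nat \<Rightarrow> (nat \<Rightarrow> real) \<Rightarrow> (nat \<Rightarrow> real) \<Rightarrow> real" where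
  "stat_dist n p q = Max ((\<lambda>A. \<bar>(\<Sum>i\<in>A. p i) - (\<Sum>i\<in>A. q i)\<bar>) ` Pow {1..n})"

definition neighboring :: "nat \<Rightarrow> (nat \<Rightarrow> 'a) \<Rightarrow> (nat \<Rightarrow> 'a) \<Rightarrow> bool" where
  "neighboring n S S' = (card {i\<in>{1..n}. S i \<noteq> S' i} \<le> 1)"

definition valid_sample :: "nat \<Rightarrow> (nat \<Rightarrow> 'x \<times> real) \<Rightarrow> bool" where
  "valid_sample n S = (\<forall>i\<in>{1..n}. snd (S i) \<in> {-1, 1})"

end

theory Submission imports Defs begin

definition Dt :: "real \<Rightarrow> real \<Rightarrow> real" where
  "Dt x y = (if x = 0 then 0 else x * ln (x / y)) - x + y"

lemma Dt_nonneg: assumes "0 < y" "0 \<le> x" shows "0 \<le> Dt x y"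
proof (cases "x = 0")
  case True thus ?thesis using assms by (simp add: Dt_def)
next
  case False
  hence x: "0 < x" using assms by simp
  have "ln (y / x) \<le> y / x - 1" using ln_le_minus_one[of "y/x"] x assms by simp
  moreover have "ln (x / y) = - ln (y / x)" using x assms by (simp add: ln_div)
  ultimately have "1 - y / x \<le> ln (x / y)" by linarith
  hence "x * ln (x / y) \<ge> x * (1 - y / x)" using x
    by (simp add: mult_left_mono)
  also have "x * (1 - y / x) = x - y" using x by (simp add: field_simps)
  finally show ?thesis using False by (simp add: Dt_def)
qed

lemma Dt_zero: assumes "0 < y" "0 \<le> x" "Dt x y \<le> 0" shows "x = y"
proof (cases "x = 0")
  case True thus ?thesis using assms by (simp add: Dt_def)
next
  case False
  hence x: "0 < x" using assms by simp
  have le: "ln (y / x) \<le> y / x - 1" using ln_le_minus_one[of "y/x"] x assms by simp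
  have eq: "ln (x / y) = - ln (y / x)" using x assms by (simp add: ln_div)
  have "x * ln (x / y) \<le> x - y" using assms(3) False by (simp add: Dt_def)
  moreover have "x * (1 - y / x) = x - y" using x by (simp add: field_simps)
  ultimately have "x * (- ln (y / x)) \<le> x * (1 - y / x)" using eq by simp
  hence "- ln (y / x) \<le> 1 - y / x" using x mult_le_cancel_left_pos[of x "- ln (y / x)" "1 - y / x"] by simp
  hence "ln (y / x) = y / x - 1" using le by linarith
  hence "y / x = 1" using ln_eq_minus_one[of "y/x"] x assms by simp
  thus ?thesis using x by simp
qed

lemma term_split: assumes "0 < a" "0 < y" "0 \<le> x"
  shows "((if x = 0 then 0 else x * ln (x / a)) + a - x) - ((if y = 0 then 0 else y * ln (y / a)) + a - y)
     = Dt x y + ln (y / a) * (x - y)"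
proof (cases "x = 0")
  case True thus ?thesis using assms by (simp add: Dt_def algebra_simps)
next
  case False
  hence x: "0 < x" using assms by simp
  have "ln (x / a) = ln (x / y) + ln (y / a)" using x assms by (simp add: ln_div)
  thus ?thesis using x assms False by (simp add: Dt_def algebra_simps)
qed

lemma lin_part: fixes c a x :: real assumes "1 \<le> c" "0 < a" "0 \<le> x" "x \<le> 1"
  shows "ln (min 1 (c * a) / a) * (x - min 1 (c * a)) \<ge> ln c * (x - min 1 (c * a))"
proof (cases "c * a \<le> 1")
  case True
  hence "min 1 (c * a) = c * a" by (rule min_absorb2)
  moreover have "c * a / a = c" using assms by simp
  ultimately show ?thesis by simp
next
  case False
  hence "1 / a < c" using assms by (simp add: field_simps)
  hence "ln (1 / a) < ln c" using assms by simp
  moreover have "x - 1 \<le> 0" using assms by simp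
  ultimately have "ln (1 / a) * (x - 1) \<ge> ln c * (x - 1)"
    by (simp add: mult_right_mono_neg)
  thus ?thesis using False by simp
qed

lemma proj_char:
  fixes n :: nat and \<kappa> :: real and a :: "nat \<Rightarrow> real"
  assumes n: "0 < n" and k: "0 < \<kappa>" "\<kappa> < 1"
    and a: "\<forall>i\<in>{1..n}. 0 < a i \<and> a i \<le> \<kappa>"
  shows "\<exists>c\<ge>1. proj_Gamma n \<kappa> a = (\<lambda>i. if i \<in> {1..n} then min 1 (c * a i) else 0)
           \<and> (\<Sum>i\<in>{1..n}. min 1 (c * a i)) = \<kappa> * n"
proof -
  define g where "g c = (\<Sum>i\<in>{1..n}. min 1 (c * a i))" for c
  define C where "C = 1 + (\<Sum>i\<in>{1..n}. 1 / a i)"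
  have "g 1 \<le> (\<Sum>i\<in>{1..n}. \<kappa>)" unfolding g_def
    by (rule sum_mono) (use a in \<open>auto simp: min_le_iff_disj\<close>)
  hence g1: "g 1 \<le> \<kappa> * n" by (simp add: mult.commute)
  have Cge: "1 / a i \<le> C" if "i \<in> {1..n}" for i
  proof -
    have "1 / a i \<le> (\<Sum>i\<in>{1..n}. 1 / a i)"
      by (rule member_le_sum) (use a that in \<open>auto simp: less_imp_le\<close>)
    thus ?thesis unfolding C_def by simp
  qed
  have C1: "1 \<le> C" unfolding C_def using a by (auto intro!: sum_nonneg)
  have "g C = (\<Sum>i\<in>{1..n}. 1)" unfolding g_def
  proof (rule sum.cong)
    fix i assume i: "i \<in> {1..n}"
    have "1 \<le> C * a i" using Cge[OF i] a i by (simp add: field_simps)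
    thus "min 1 (C * a i) = 1" by simp
  qed simp
  hence gC: "\<kappa> * n \<le> g C" using k mult_right_mono[of \<kappa> 1 "real n"] by simp
  have cont: "continuous_on {1..C} g" unfolding g_def by (intro continuous_intros)
  obtain c where c: "1 \<le> c" "c \<le> C" "g c = \<kappa> * n" using IVT'[OF g1 gC C1 cont] by blast
  define \<nu> where "\<nu> = (\<lambda>i. if i \<in> {1..n} then min 1 (c * a i) else 0)"
  have \<nu>sum: "(\<Sum>i\<in>{1..n}. \<nu> i) = \<kappa> * n" using c(3) unfolding g_def \<nu>_def by simp
  have \<nu>pos: "0 < \<nu> i" if "i \<in> {1..n}" for i using a that c(1) by (simp add: \<nu>_def)
  have \<nu>G: "\<nu> \<in> Gamma n \<kappa>"
    unfolding Gamma_def measures_def density_def msize_def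
    using \<nu>sum n a c(1) by (auto simp: \<nu>_def)
  have opt: "KL n \<nu> a \<le> KL n \<mu> a \<and> (KL n \<mu> a \<le> KL n \<nu> a \<longrightarrow> \<mu> = \<nu>)"
    if \<mu>G: "\<mu> \<in> Gamma n \<kappa>" for \<mu>
  proof -
    have \<mu>b: "0 \<le> \<mu> i \<and> \<mu> i \<le> 1" if "i \<in> {1..n}" for i
      using \<mu>G that unfolding Gamma_def measures_def by auto
    have \<mu>0: "\<mu> i = 0" if "i \<notin> {1..n}" for i
      using \<mu>G that unfolding Gamma_def measures_def by auto
    have "\<kappa> \<le> (\<Sum>i\<in>{1..n}. \<mu> i) / n"
      using \<mu>G unfolding Gamma_def density_def msize_def by auto
    hence \<mu>sum: "\<kappa> * n \<le> (\<Sum>i\<in>{1..n}. \<mu> i)" using n by (simp add: field_simps)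
    have "KL n \<mu> a - KL n \<nu> a = (\<Sum>i\<in>{1..n}. Dt (\<mu> i) (\<nu> i) + ln (\<nu> i / a i) * (\<mu> i - \<nu> i))"
      unfolding KL_def sum_subtractf[symmetric]
    proof (rule sum.cong)
      fix i assume i: "i \<in> {1..n}"
      show "(if \<mu> i = 0 then 0 else \<mu> i * ln (\<mu> i / a i)) + a i - \<mu> i -
          ((if \<nu> i = 0 then 0 else \<nu> i * ln (\<nu> i / a i)) + a i - \<nu> i) =
          Dt (\<mu> i) (\<nu> i) + ln (\<nu> i / a i) * (\<mu> i - \<nu> i)"
        by (rule term_split) (use a \<mu>b \<nu>pos i in auto)
    qed simp
    also have "\<dots> \<ge> (\<Sum>i\<in>{1..n}. Dt (\<mu> i) (\<nu> i) + ln c * (\<mu> i - \<nu> i))"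
      by (rule sum_mono) (use a \<mu>b c(1) lin_part in \<open>auto simp: \<nu>_def\<close>)
    moreover have "(\<Sum>i\<in>{1..n}. Dt (\<mu> i) (\<nu> i) + ln c * (\<mu> i - \<nu> i))
        = (\<Sum>i\<in>{1..n}. Dt (\<mu> i) (\<nu> i)) + ln c * ((\<Sum>i\<in>{1..n}. \<mu> i) - (\<Sum>i\<in>{1..n}. \<nu> i))"
      by (simp add: sum.distrib sum_distrib_left[symmetric] sum_subtractf)
    moreover have "ln c * ((\<Sum>i\<in>{1..n}. \<mu> i) - (\<Sum>i\<in>{1..n}. \<nu> i)) \<ge> 0"
      using \<mu>sum \<nu>sum c(1) by simp
    moreover have Dn: "\<forall>i\<in>{1..n}. 0 \<le> Dt (\<mu> i) (\<nu> i)" using Dt_nonneg \<mu>b \<nu>pos by auto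
    moreover have Ds: "(\<Sum>i\<in>{1..n}. Dt (\<mu> i) (\<nu> i)) \<ge> 0" using Dn by (intro sum_nonneg) blast
    ultimately have diff: "KL n \<mu> a - KL n \<nu> a \<ge> (\<Sum>i\<in>{1..n}. Dt (\<mu> i) (\<nu> i))"
      by linarith
    have ge: "KL n \<nu> a \<le> KL n \<mu> a" using diff Ds by linarith
    moreover have "\<mu> = \<nu>" if "KL n \<mu> a \<le> KL n \<nu> a"
    proof
      fix i show "\<mu> i = \<nu> i"
      proof (cases "i \<in> {1..n}")
        case True
        have "(\<Sum>i\<in>{1..n}. Dt (\<mu> i) (\<nu> i)) = 0" using diff that Ds
          by linarith
        hence "Dt (\<mu> i) (\<nu> i) = 0" using sum_nonneg_eq_0_iff[of "{1..n}" "\<lambda>i. Dt (\<mu> i) (\<nu> i)"] Dn True by simp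
        thus ?thesis using Dt_zero \<mu>b \<nu>pos True by auto
      next
        case False thus ?thesis using \<mu>0[OF False] unfolding \<nu>_def by auto
      qed
    qed
    ultimately show ?thesis by blast
  qed
  have ex: "\<exists>\<mu>. \<mu> \<in> Gamma n \<kappa> \<and> (\<forall>\<nu>'\<in>Gamma n \<kappa>. KL n \<mu> a \<le> KL n \<nu>' a)"
    using \<nu>G opt by blast
  have "proj_Gamma n \<kappa> a \<in> Gamma n \<kappa> \<and> (\<forall>\<nu>'\<in>Gamma n \<kappa>. KL n (proj_Gamma n \<kappa> a) a \<le> KL n \<nu>' a)"
    unfolding proj_Gamma_def by (rule someI_ex[OF ex])
  hence "proj_Gamma n \<kappa> a = \<nu>" using opt \<nu>G by blast
  thus ?thesis using c \<nu>sum unfolding \<nu>_def by auto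
qed

lemma abs_sum_le1:
  fixes d :: "nat \<Rightarrow> real" and I A :: "nat set"
  assumes fin: "finite I" and AI: "A \<subseteq> I" and j: "j \<in> I"
    and nn: "\<forall>i\<in>I. i \<noteq> j \<longrightarrow> 0 \<le> d i" and s0: "(\<Sum>i\<in>I. d i) = 0" and dj: "\<bar>d j\<bar> \<le> 1"
  shows "\<bar>\<Sum>i\<in>A. d i\<bar> \<le> 1"
proof -
  have finA: "finite A" using fin AI finite_subset by blast
  have e: "(\<Sum>i\<in>I. d i) = d j + (\<Sum>i\<in>I-{j}. d i)" using fin j by (simp add: sum.remove)
  have lo: "0 \<le> (\<Sum>i\<in>A-{j}. d i)" using nn AI by (intro sum_nonneg) auto
  have hi: "(\<Sum>i\<in>A-{j}. d i) \<le> (\<Sum>i\<in>I-{j}. d i)"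
  proof (rule sum_mono2)
    show "finite (I - {j})" using fin by blast
    show "A - {j} \<subseteq> I - {j}" using AI by blast
    show "\<And>b. b \<in> I - {j} - (A - {j}) \<Longrightarrow> 0 \<le> d b" using nn by blast
  qed
  show ?thesis
  proof (cases "j \<in> A")
    case True
    have "(\<Sum>i\<in>A. d i) = d j + (\<Sum>i\<in>A-{j}. d i)" using finA True by (simp add: sum.remove)
    thus ?thesis using lo hi e s0 dj by linarith
  next
    case False
    hence "A - {j} = A" by blast
    hence "(\<Sum>i\<in>A. d i) = (\<Sum>i\<in>A-{j}. d i)" by simp
    thus ?thesis using lo hi e s0 dj by linarith
  qed
qed

lemma sd_bound:
  fixes n :: nat and \<kappa> :: real and \<nu> \<nu>' :: "nat \<Rightarrow> real"
  assumes n: "0 < n" and k: "0 < \<kappa>"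
    and b: "\<forall>i\<in>{1..n}. 0 \<le> \<nu> i \<and> \<nu> i \<le> 1 \<and> 0 \<le> \<nu>' i \<and> \<nu>' i \<le> 1"
    and s: "(\<Sum>i\<in>{1..n}. \<nu> i) = \<kappa> * n" "(\<Sum>i\<in>{1..n}. \<nu>' i) = \<kappa> * n"
    and j: "j \<in> {1..n}" and le: "\<forall>i\<in>{1..n}. i \<noteq> j \<longrightarrow> \<nu>' i \<le> \<nu> i"
  shows "stat_dist n (\<lambda>i. \<nu> i / (\<kappa> * n)) (\<lambda>i. \<nu>' i / (\<kappa> * n)) \<le> 1 / (\<kappa> * n)
       \<and> stat_dist n (\<lambda>i. \<nu>' i / (\<kappa> * n)) (\<lambda>i. \<nu> i / (\<kappa> * n)) \<le> 1 / (\<kappa> * n)"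
proof -
  have kn: "0 < \<kappa> * n" using n k by simp
  have core: "\<bar>(\<Sum>i\<in>A. \<nu> i) - (\<Sum>i\<in>A. \<nu>' i)\<bar> \<le> 1" if A: "A \<subseteq> {1..n}" for A
  proof -
    have bj: "0 \<le> \<nu> j \<and> \<nu> j \<le> 1 \<and> 0 \<le> \<nu>' j \<and> \<nu>' j \<le> 1" using b j by blast
    hence "\<bar>\<nu> j - \<nu>' j\<bar> \<le> 1" by (simp add: abs_le_iff)
    have "\<bar>\<Sum>i\<in>A. \<nu> i - \<nu>' i\<bar> \<le> 1"
      by (rule abs_sum_le1[OF _ A j]) (use le s b j \<open>\<bar>\<nu> j - \<nu>' j\<bar> \<le> 1\<close> in \<open>auto simp: sum_subtractf\<close>)
    thus ?thesis by (simp add: sum_subtractf)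
  qed
  have one: "\<bar>(\<Sum>i\<in>A. p i / (\<kappa> * n)) - (\<Sum>i\<in>A. q i / (\<kappa> * n))\<bar> \<le> 1 / (\<kappa> * n)"
    if "\<bar>(\<Sum>i\<in>A. p i) - (\<Sum>i\<in>A. q i)\<bar> \<le> 1" for A p q
  proof -
    have "(\<Sum>i\<in>A. p i / (\<kappa> * n)) - (\<Sum>i\<in>A. q i / (\<kappa> * n)) = ((\<Sum>i\<in>A. p i) - (\<Sum>i\<in>A. q i)) / (\<kappa> * n)"
      by (simp add: sum_divide_distrib diff_divide_distrib)
    hence "\<bar>(\<Sum>i\<in>A. p i / (\<kappa> * n)) - (\<Sum>i\<in>A. q i / (\<kappa> * n))\<bar> = \<bar>(\<Sum>i\<in>A. p i) - (\<Sum>i\<in>A. q i)\<bar> / (\<kappa> * n)"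
      using kn by simp
    thus ?thesis using that kn by (simp add: divide_right_mono)
  qed
  show ?thesis unfolding stat_dist_def
  proof (intro conjI Max.boundedI)
    show "finite ((\<lambda>A. \<bar>(\<Sum>i\<in>A. \<nu> i / (\<kappa> * n)) - (\<Sum>i\<in>A. \<nu>' i / (\<kappa> * n))\<bar>) ` Pow {1..n})" by simp
    show "finite ((\<lambda>A. \<bar>(\<Sum>i\<in>A. \<nu>' i / (\<kappa> * n)) - (\<Sum>i\<in>A. \<nu> i / (\<kappa> * n))\<bar>) ` Pow {1..n})" by simp
  next
    fix x assume "x \<in> (\<lambda>A. \<bar>(\<Sum>i\<in>A. \<nu> i / (\<kappa> * n)) - (\<Sum>i\<in>A. \<nu>' i / (\<kappa> * n))\<bar>) ` Pow {1..n}"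
    then obtain A where A: "A \<subseteq> {1..n}" and x: "x = \<bar>(\<Sum>i\<in>A. \<nu> i / (\<kappa> * n)) - (\<Sum>i\<in>A. \<nu>' i / (\<kappa> * n))\<bar>" by auto
    show "x \<le> 1 / (\<kappa> * n)" unfolding x by (rule one[OF core[OF A]])
  next
    fix x assume "x \<in> (\<lambda>A. \<bar>(\<Sum>i\<in>A. \<nu>' i / (\<kappa> * n)) - (\<Sum>i\<in>A. \<nu> i / (\<kappa> * n))\<bar>) ` Pow {1..n}"
    then obtain A where A: "A \<subseteq> {1..n}" and x: "x = \<bar>(\<Sum>i\<in>A. \<nu>' i / (\<kappa> * n)) - (\<Sum>i\<in>A. \<nu> i / (\<kappa> * n))\<bar>" by auto
    have "\<bar>(\<Sum>i\<in>A. \<nu>' i) - (\<Sum>i\<in>A. \<nu> i)\<bar> \<le> 1" using core[OF A] by (simp add: abs_minus_commute)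
    then show "x \<le> 1 / (\<kappa> * n)" unfolding x by (rule one)
  qed auto
qed

lemma loss_nonneg:
  fixes hs :: "('x \<Rightarrow> real) list"
  assumes "snd p \<in> {-1, 1}" "\<forall>h\<in>set hs. \<forall>x. -1 \<le> h x \<and> h x \<le> 1"
  shows "0 \<le> (\<Sum>h\<leftarrow>hs. 1 - \<bar>h (fst p) - snd p\<bar> / 2)"
  using assms(2)
proof (induction hs)
  case Nil thus ?case by simp
next
  case (Cons h hs)
  have "-1 \<le> h (fst p) \<and> h (fst p) \<le> 1" using Cons.prems by simp
  hence "\<bar>h (fst p) - snd p\<bar> \<le> 2" using assms(1) by (auto simp: abs_le_iff)
  thus ?case using Cons by simp
qed

lemma a_bounds:
  fixes hs :: "('x \<Rightarrow> real) list" and S :: "nat \<Rightarrow> 'x \<times> real"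
  assumes "valid_sample n S" "\<forall>h\<in>set hs. \<forall>x. -1 \<le> h x \<and> h x \<le> 1" "0 < \<kappa>" "0 < lam"
  shows "\<forall>i\<in>{1..n}. 0 < (if i \<in> {1..n} then \<kappa> * exp (- lam * (\<Sum>h\<leftarrow>hs. 1 - \<bar>h (fst (S i)) - snd (S i)\<bar> / 2)) else 0)
     \<and> (if i \<in> {1..n} then \<kappa> * exp (- lam * (\<Sum>h\<leftarrow>hs. 1 - \<bar>h (fst (S i)) - snd (S i)\<bar> / 2)) else 0) \<le> \<kappa>"
proof
  fix i assume i: "i \<in> {1..n}"
  have L: "0 \<le> (\<Sum>h\<leftarrow>hs. 1 - \<bar>h (fst (S i)) - snd (S i)\<bar> / 2)"
    by (rule loss_nonneg) (use assms(1,2) i in \<open>auto simp: valid_sample_def\<close>)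
  have "- lam * (\<Sum>h\<leftarrow>hs. 1 - \<bar>h (fst (S i)) - snd (S i)\<bar> / 2) \<le> 0"
    using L assms(4) by (simp add: mult_nonneg_nonneg)
  hence "exp (- lam * (\<Sum>h\<leftarrow>hs. 1 - \<bar>h (fst (S i)) - snd (S i)\<bar> / 2)) \<le> 1" by simp
  hence "\<kappa> * exp (- lam * (\<Sum>h\<leftarrow>hs. 1 - \<bar>h (fst (S i)) - snd (S i)\<bar> / 2)) \<le> \<kappa>"
    using assms(3) mult_left_mono[of _ 1 \<kappa>] by fastforce
  thus "0 < (if i \<in> {1..n} then \<kappa> * exp (- lam * (\<Sum>h\<leftarrow>hs. 1 - \<bar>h (fst (S i)) - snd (S i)\<bar> / 2)) else 0)
     \<and> (if i \<in> {1..n} then \<kappa> * exp (- lam * (\<Sum>h\<leftarrow>hs. 1 - \<bar>h (fst (S i)) - snd (S i)\<bar> / 2)) else 0) \<le> \<kappa>"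
    using i assms(3) by simp
qed

theorem mainTheorem4:
  fixes \<kappa> lam :: real and n :: nat
    and S S' :: "nat \<Rightarrow> 'x \<times> real" and hs :: "('x \<Rightarrow> real) list"
  assumes "0 < \<kappa>" "\<kappa> < 1" "0 < lam" "lam < 1"
    and "valid_sample n S" "valid_sample n S'"
    and "neighboring n S S'"
    and "\<forall>h\<in>set hs. \<forall>x. -1 \<le> h x \<and> h x \<le> 1"
  shows "stat_dist n (LB_NxM \<kappa> lam n S hs) (LB_NxM \<kappa> lam n S' hs) \<le> 1 / (\<kappa> * real n)"
proof (cases "n = 0")
  case True thus ?thesis by (simp add: stat_dist_def)
next
  case False
  hence n: "0 < n" by simp
  define aa where "aa T = (\<lambda>i. if i \<in> {1..n} then \<kappa> * exp (- lam * (\<Sum>h\<leftarrow>hs. 1 - \<bar>h (fst (T i)) - snd (T i)\<bar> / 2)) else 0)"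
    for T :: "nat \<Rightarrow> 'x \<times> real"
  have LB: "LB_NxM \<kappa> lam n T hs = normalize n (proj_Gamma n \<kappa> (aa T))" for T
    unfolding LB_NxM_def aa_def Let_def by simp
  have ab: "\<forall>i\<in>{1..n}. 0 < aa S i \<and> aa S i \<le> \<kappa>" unfolding aa_def
    by (rule a_bounds) (use assms in auto)
  have ab': "\<forall>i\<in>{1..n}. 0 < aa S' i \<and> aa S' i \<le> \<kappa>" unfolding aa_def
    by (rule a_bounds) (use assms in auto)
  obtain j where j: "j \<in> {1..n}" and jS: "\<forall>i\<in>{1..n}. i \<noteq> j \<longrightarrow> S i = S' i"
  proof (cases "{i\<in>{1..n}. S i \<noteq> S' i} = {}")
    case True
    show ?thesis by (rule that[of 1]) (use n True in auto)
  next
    case False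
    have "card {i\<in>{1..n}. S i \<noteq> S' i} \<le> 1" using assms(7) unfolding neighboring_def .
    moreover have "card {i\<in>{1..n}. S i \<noteq> S' i} \<noteq> 0" using False by simp
    ultimately have "card {i\<in>{1..n}. S i \<noteq> S' i} = 1" by linarith
    then obtain k where k: "{i\<in>{1..n}. S i \<noteq> S' i} = {k}" by (rule card_1_singletonE)
    show ?thesis by (rule that[of k]) (use k in blast)+
  qed
  have aeq: "\<forall>i\<in>{1..n}. i \<noteq> j \<longrightarrow> aa S' i = aa S i" using jS unfolding aa_def by simp
  obtain c where c: "c \<ge> 1" "proj_Gamma n \<kappa> (aa S) = (\<lambda>i. if i \<in> {1..n} then min 1 (c * aa S i) else 0)"
      "(\<Sum>i\<in>{1..n}. min 1 (c * aa S i)) = \<kappa> * n"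
    using proj_char[OF n assms(1,2) ab] by blast
  obtain c' where c': "c' \<ge> 1" "proj_Gamma n \<kappa> (aa S') = (\<lambda>i. if i \<in> {1..n} then min 1 (c' * aa S' i) else 0)"
      "(\<Sum>i\<in>{1..n}. min 1 (c' * aa S' i)) = \<kappa> * n"
    using proj_char[OF n assms(1,2) ab'] by blast
  define \<nu> where "\<nu> = (\<lambda>i. if i \<in> {1..n} then min 1 (c * aa S i) else 0)"
  define \<nu>' where "\<nu>' = (\<lambda>i. if i \<in> {1..n} then min 1 (c' * aa S' i) else 0)"
  have s: "(\<Sum>i\<in>{1..n}. \<nu> i) = \<kappa> * n" using c(3) unfolding \<nu>_def by simp
  have s': "(\<Sum>i\<in>{1..n}. \<nu>' i) = \<kappa> * n" using c'(3) unfolding \<nu>'_def by simp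
  have N: "LB_NxM \<kappa> lam n S hs = (\<lambda>i. \<nu> i / (\<kappa> * n))"
    unfolding LB c(2) \<nu>_def[symmetric] normalize_def msize_def s ..
  have N': "LB_NxM \<kappa> lam n S' hs = (\<lambda>i. \<nu>' i / (\<kappa> * n))"
    unfolding LB c'(2) \<nu>'_def[symmetric] normalize_def msize_def s' ..
  have b: "\<forall>i\<in>{1..n}. 0 \<le> \<nu> i \<and> \<nu> i \<le> 1 \<and> 0 \<le> \<nu>' i \<and> \<nu>' i \<le> 1"
    using ab ab' c(1) c'(1) unfolding \<nu>_def \<nu>'_def by auto
  have b': "\<forall>i\<in>{1..n}. 0 \<le> \<nu>' i \<and> \<nu>' i \<le> 1 \<and> 0 \<le> \<nu> i \<and> \<nu> i \<le> 1" using b by blast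
  show ?thesis
  proof (cases "c' \<le> c")
    case True
    have le: "\<forall>i\<in>{1..n}. i \<noteq> j \<longrightarrow> \<nu>' i \<le> \<nu> i"
    proof (intro ballI impI)
      fix i assume i: "i \<in> {1..n}" "i \<noteq> j"
      have "c' * aa S' i \<le> c * aa S i" using aeq i ab True by (simp add: mult_right_mono)
      thus "\<nu>' i \<le> \<nu> i" using i unfolding \<nu>_def \<nu>'_def by simp
    qed
    show ?thesis unfolding N N' using sd_bound[OF n assms(1) b s s' j le] by blast
  next
    case False
    have le: "\<forall>i\<in>{1..n}. i \<noteq> j \<longrightarrow> \<nu> i \<le> \<nu>' i"
    proof (intro ballI impI)
      fix i assume i: "i \<in> {1..n}" "i \<noteq> j"
      have "c * aa S i \<le> c' * aa S' i" using aeq i ab False by (simp add: mult_right_mono)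
      thus "\<nu> i \<le> \<nu>' i" using i unfolding \<nu>_def \<nu>'_def by simp
    qed
    show ?thesis unfolding N N' using sd_bound[OF n assms(1) b' s' s j le] by blast
  qed
qed

end
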